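(* Let $P_{IV}\subset\mathbb{R}^6$ be the polytope of $\alpha=(\alpha_0,\dots,\alpha_5)$ defined by \[ \alpha_4+\alpha_5\ge1,\quad\alpha_r+\alpha_s\ge0\ (1\le r<s\le3),\quad\alpha_0+\alpha_r\ge0\ (r=4,5),\quad\sum_{r=0}^5\alpha_r=1. \] Then the vertices of $P_{IV}$ are the orbits under $S_1\times S_3\times S_2$ (with $S_3$ permuting $(\alpha_1,\alpha_2,\alpha_3)$ and $S_2$ permuting $(\alpha_4,\alpha_5)$) of the points $(0,0,0,0,0,1)$, $(-\frac12,-\frac12,\frac12,\frac12,\frac12,\frac12)$ and $(-1,0,0,0,1,1)$. *)

theory Defs
  imports "HOL-Analysis.Analysis"
begin

definition mk6 :: "real \<Rightarrow> real \<Rightarrow> real \<Rightarrow> real \<Rightarrow> real \<Rightarrow> real \<Rightarrow> real ^ 6" where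
  "mk6 a0 a1 a2 a3 a4 a5 = (\<chi> i. if i = 0 then a0 else if i = 1 then a1 else if i = 2 then a2
      else if i = 3 then a3 else if i = 4 then a4 else a5)"

definition P_IV :: "(real ^ 6) set" where
  "P_IV = {x. x $ 4 + x $ 5 \<ge> 1
      \<and> (\<forall>r s::6. r \<in> {1,2,3} \<and> s \<in> {1,2,3} \<and> r \<noteq> s \<longrightarrow> x $ r + x $ s \<ge> 0)
      \<and> (\<forall>r::6. r \<in> {4,5} \<longrightarrow> x $ 0 + x $ r \<ge> 0)
      \<and> (\<Sum>i\<in>UNIV. x $ i) = 1}"

definition G_IV :: "(6 \<Rightarrow> 6) set" where
  "G_IV = {p. bij p \<and> p 0 = 0 \<and> p ` {1,2,3} = {1,2,3} \<and> p ` {4,5} = {4,5}}"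

definition perm_coords :: "(6 \<Rightarrow> 6) \<Rightarrow> real ^ 6 \<Rightarrow> real ^ 6" where
  "perm_coords p x = (\<chi> i. x $ p i)"

definition orbit_IV :: "real ^ 6 \<Rightarrow> (real ^ 6) set" where
  "orbit_IV v = (\<lambda>p. perm_coords p v) ` G_IV"

end

theory Submission imports Defs begin
lemma six_cases: "(i::6) = 0 \<or> i = 1 \<or> i = 2 \<or> i = 3 \<or> i = 4 \<or> i = 5"
proof (cases i)
  case (of_int z)
  then have "z = 0 \<or> z = 1 \<or> z = 2 \<or> z = 3 \<or> z = 4 \<or> z = 5" by auto
  then show ?thesis using of_int by auto
qed
lemma UNIV6: "(UNIV::6 set) = {0,1,2,3,4,5}" using six_cases by auto

lemma sum6: "(\<Sum>i\<in>UNIV. (x::real^6) $ i) = x$0 + x$1 + x$2 + x$3 + x$4 + (x$5::real)"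
  unfolding UNIV6 by simp

lemma vec6_eq: "(x::real^6) = y \<longleftrightarrow> x$0=y$0 \<and> x$1=y$1 \<and> x$2=y$2 \<and> x$3=y$3 \<and> x$4=y$4 \<and> x$5=y$5"
proof
  assume H: "x$0=y$0 \<and> x$1=y$1 \<and> x$2=y$2 \<and> x$3=y$3 \<and> x$4=y$4 \<and> x$5=y$5"
  show "x = y" unfolding vec_eq_iff
  proof
    fix i :: 6
    show "x $ i = y $ i" using six_cases[of i] H by (elim disjE) simp_all
  qed
qed simp

lemma mk6_nth[simp]: "mk6 a0 a1 a2 a3 a4 a5 $ 0 = a0" "mk6 a0 a1 a2 a3 a4 a5 $ 1 = a1"
  "mk6 a0 a1 a2 a3 a4 a5 $ 2 = a2" "mk6 a0 a1 a2 a3 a4 a5 $ 3 = a3"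
  "mk6 a0 a1 a2 a3 a4 a5 $ 4 = a4" "mk6 a0 a1 a2 a3 a4 a5 $ 5 = a5"
  by (simp_all add: mk6_def)

lemma P_IV_iff: "x \<in> P_IV \<longleftrightarrow> x$4+x$5 \<ge> 1 \<and> x$1+x$2 \<ge> 0 \<and> x$1+x$3 \<ge> 0 \<and> x$2+x$3 \<ge> 0
   \<and> x$0+x$4 \<ge> 0 \<and> x$0+x$5 \<ge> 0 \<and> x$0+x$1+x$2+x$3+x$4+x$5 = 1"
proof
  assume "x \<in> P_IV"
  then have A: "x $ 4 + x $ 5 \<ge> 1"
      and B: "\<And>r s. r \<in> {1,2,3::6} \<Longrightarrow> s \<in> {1,2,3} \<Longrightarrow> r \<noteq> s \<Longrightarrow> x $ r + x $ s \<ge> 0"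
      and C: "\<And>r. r \<in> {4,5::6} \<Longrightarrow> x $ 0 + x $ r \<ge> 0"
      and D: "x$0+x$1+x$2+x$3+x$4+x$5 = 1"
    unfolding P_IV_def sum6 by auto
  show "x$4+x$5 \<ge> 1 \<and> x$1+x$2 \<ge> 0 \<and> x$1+x$3 \<ge> 0 \<and> x$2+x$3 \<ge> 0
   \<and> x$0+x$4 \<ge> 0 \<and> x$0+x$5 \<ge> 0 \<and> x$0+x$1+x$2+x$3+x$4+x$5 = 1"
    using A B[of 1 2] B[of 1 3] B[of 2 3] C[of 4] C[of 5] D by simp
next
  assume H: "x$4+x$5 \<ge> 1 \<and> x$1+x$2 \<ge> 0 \<and> x$1+x$3 \<ge> 0 \<and> x$2+x$3 \<ge> 0
   \<and> x$0+x$4 \<ge> 0 \<and> x$0+x$5 \<ge> 0 \<and> x$0+x$1+x$2+x$3+x$4+x$5 = 1"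
  have B: "x $ r + x $ s \<ge> 0" if "r \<in> {1,2,3::6}" "s \<in> {1,2,3}" "r \<noteq> s" for r s
    using that H by (auto simp: add.commute)
  show "x \<in> P_IV" unfolding P_IV_def sum6 using H B by auto
qed

definition "V1 = mk6 0 0 0 0 0 1"
definition "V2 = mk6 0 0 0 0 1 0"
definition "V3 = mk6 (-1/2) (-1/2) (1/2) (1/2) (1/2) (1/2)"
definition "V4 = mk6 (-1/2) (1/2) (-1/2) (1/2) (1/2) (1/2)"
definition "V5 = mk6 (-1/2) (1/2) (1/2) (-1/2) (1/2) (1/2)"
definition "V6 = mk6 (-1) 0 0 0 1 1"
lemmas Vdefs = V1_def V2_def V3_def V4_def V5_def V6_def

lemma comb_ge: "(A::real) \<ge> c \<Longrightarrow> B \<ge> c \<Longrightarrow> u \<ge> 0 \<Longrightarrow> w \<ge> 0 \<Longrightarrow> u + w = 1 \<Longrightarrow> u * A + w * B \<ge> c"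
proof -
  assume h: "A \<ge> c" "B \<ge> c" "u \<ge> 0" "w \<ge> 0" "u + w = 1"
  have "u * A \<ge> u * c" using h by (simp add: mult_left_mono)
  moreover have "w * B \<ge> w * c" using h by (simp add: mult_left_mono)
  moreover have "u*c + w*c = c" using h by (metis distrib_right mult_1)
  ultimately show ?thesis by linarith
qed

lemma convex_P: "convex P_IV"
  unfolding convex_def
proof (intro ballI allI impI)
  fix x y :: "real^6" and u w :: real
  assume x: "x \<in> P_IV" and y: "y \<in> P_IV" and uv: "0 \<le> u" "0 \<le> w" "u + w = 1"
  note X = x[unfolded P_IV_iff] and Y = y[unfolded P_IV_iff]
  have 1: "u*(x$4+x$5) + w*(y$4+y$5) \<ge> 1" using X Y uv by (intro comb_ge) auto
  have 2: "u*(x$1+x$2) + w*(y$1+y$2) \<ge> 0" using X Y uv by (intro comb_ge) auto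
  have 3: "u*(x$1+x$3) + w*(y$1+y$3) \<ge> 0" using X Y uv by (intro comb_ge) auto
  have 4: "u*(x$2+x$3) + w*(y$2+y$3) \<ge> 0" using X Y uv by (intro comb_ge) auto
  have 5: "u*(x$0+x$4) + w*(y$0+y$4) \<ge> 0" using X Y uv by (intro comb_ge) auto
  have 6: "u*(x$0+x$5) + w*(y$0+y$5) \<ge> 0" using X Y uv by (intro comb_ge) auto
  have 7: "u*(x$0+x$1+x$2+x$3+x$4+x$5) + w*(y$0+y$1+y$2+y$3+y$4+y$5) = 1" using X Y uv by simp
  show "u *\<^sub>R x + w *\<^sub>R y \<in> P_IV" unfolding P_IV_iff
    using 1 2 3 4 5 6 7 by (simp add: algebra_simps)
qed

lemma decomp: "x \<in> P_IV \<Longrightarrow> x = (x$0+x$5) *\<^sub>R V1 + (x$0+x$4) *\<^sub>R V2 + (x$2+x$3) *\<^sub>R V3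
   + (x$1+x$3) *\<^sub>R V4 + (x$1+x$2) *\<^sub>R V5 + (x$4+x$5-1) *\<^sub>R V6"
  unfolding P_IV_iff vec6_eq Vdefs by (simp add: field_simps)

lemma V_in_P: "V1 \<in> P_IV" "V2 \<in> P_IV" "V3 \<in> P_IV" "V4 \<in> P_IV" "V5 \<in> P_IV" "V6 \<in> P_IV"
  unfolding P_IV_iff Vdefs by simp_all

lemma P_hull: "P_IV = convex hull {V1,V2,V3,V4,V5,V6}"
proof
  show "convex hull {V1,V2,V3,V4,V5,V6} \<subseteq> P_IV"
    using V_in_P convex_P by (intro hull_minimal) auto
  show "P_IV \<subseteq> convex hull {V1,V2,V3,V4,V5,V6}"
  proof
    fix x assume x: "x \<in> P_IV"
    define a where "a = (\<lambda>i::nat. if i = 1 then x$0+x$5 else if i = 2 then x$0+x$4 else if i = 3 then x$2+x$3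
       else if i = 4 then x$1+x$3 else if i = 5 then x$1+x$2 else x$4+x$5-1)"
    define y where "y = (\<lambda>i::nat. if i = 1 then V1 else if i = 2 then V2 else if i = 3 then V3
       else if i = 4 then V4 else if i = 5 then V5 else V6)"
    have "(\<Sum>j\<in>{1,2,3,4,5,6}. a j *\<^sub>R y j) \<in> convex hull {V1,V2,V3,V4,V5,V6}"
    proof (rule convex_sum)
      show "sum a {1,2,3,4,5,6} = 1" using x unfolding P_IV_iff a_def by simp
      show "\<And>i. i \<in> {1,2,3,4,5,6} \<Longrightarrow> 0 \<le> a i" using x unfolding P_IV_iff a_def by auto
      show "\<And>i. i \<in> {1,2,3,4,5,6} \<Longrightarrow> y i \<in> convex hull {V1,V2,V3,V4,V5,V6}"
        unfolding y_def by (auto intro: hull_inc)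
    qed auto
    moreover have "(\<Sum>j\<in>{1,2,3,4,5,6}. a j *\<^sub>R y j) = x"
      using decomp[OF x] unfolding a_def y_def by (simp add: algebra_simps)
    ultimately show "x \<in> convex hull {V1,V2,V3,V4,V5,V6}" by simp
  qed
qed

lemma tight: "0 < u \<Longrightarrow> u < 1 \<Longrightarrow> (A::real) \<ge> c \<Longrightarrow> B \<ge> c \<Longrightarrow> (1-u)*A + u*B = c \<Longrightarrow> A = c \<and> B = c"
proof -
  assume h: "0 < u" "u < 1" "A \<ge> c" "B \<ge> c" "(1-u)*A + u*B = c"
  have e: "(1-u)*(A-c) + u*(B-c) = 0" using h(5) by (simp add: algebra_simps)
  have p1: "(1-u)*(A-c) \<ge> 0" using h by simp
  have p2: "u*(B-c) \<ge> 0" using h by simp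
  have "(1-u)*(A-c) = 0" "u*(B-c) = 0" using e p1 p2 by linarith+
  then show ?thesis using h by simp
qed

lemma seg_tight:
  assumes a: "a \<in> P_IV" and b: "b \<in> P_IV" and u: "0 < u" "u < 1"
    and v: "v = (1 - u) *\<^sub>R a + u *\<^sub>R b"
  shows "(v$4+v$5 = 1 \<longrightarrow> a$4+a$5 = 1 \<and> b$4+b$5 = 1)
       \<and> (v$1+v$2 = 0 \<longrightarrow> a$1+a$2 = 0 \<and> b$1+b$2 = 0)
       \<and> (v$1+v$3 = 0 \<longrightarrow> a$1+a$3 = 0 \<and> b$1+b$3 = 0)
       \<and> (v$2+v$3 = 0 \<longrightarrow> a$2+a$3 = 0 \<and> b$2+b$3 = 0)
       \<and> (v$0+v$4 = 0 \<longrightarrow> a$0+a$4 = 0 \<and> b$0+b$4 = 0)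
       \<and> (v$0+v$5 = 0 \<longrightarrow> a$0+a$5 = 0 \<and> b$0+b$5 = 0)"
proof -
  note A = a[unfolded P_IV_iff] and B = b[unfolded P_IV_iff]
  have ci: "\<And>i. v$i = (1-u)*a$i + u*b$i" using v by simp
  have c: "\<And>i j. v$i + v$j = (1-u)*(a$i+a$j) + u*(b$i+b$j)" by (simp add: ci algebra_simps)
  have t0: "v$4+v$5 = 1 \<longrightarrow> a$4+a$5 = 1 \<and> b$4+b$5 = 1"
    using tight[OF u, where A="a$4+a$5" and c=1 and B="b$4+b$5"] A B c[of 4 5] by auto
  have t1: "v$1+v$2 = 0 \<longrightarrow> a$1+a$2 = 0 \<and> b$1+b$2 = 0"
    using tight[OF u, where A="a$1+a$2" and c=0 and B="b$1+b$2"] A B c[of 1 2] by auto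
  have t2: "v$1+v$3 = 0 \<longrightarrow> a$1+a$3 = 0 \<and> b$1+b$3 = 0"
    using tight[OF u, where A="a$1+a$3" and c=0 and B="b$1+b$3"] A B c[of 1 3] by auto
  have t3: "v$2+v$3 = 0 \<longrightarrow> a$2+a$3 = 0 \<and> b$2+b$3 = 0"
    using tight[OF u, where A="a$2+a$3" and c=0 and B="b$2+b$3"] A B c[of 2 3] by auto
  have t4: "v$0+v$4 = 0 \<longrightarrow> a$0+a$4 = 0 \<and> b$0+b$4 = 0"
    using tight[OF u, where A="a$0+a$4" and c=0 and B="b$0+b$4"] A B c[of 0 4] by auto
  have t5: "v$0+v$5 = 0 \<longrightarrow> a$0+a$5 = 0 \<and> b$0+b$5 = 0"
    using tight[OF u, where A="a$0+a$5" and c=0 and B="b$0+b$5"] A B c[of 0 5] by auto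
  show ?thesis using t0 t1 t2 t3 t4 t5 by blast
qed

lemma extreme_V: assumes "v \<in> {V1,V2,V3,V4,V5,V6}" shows "v extreme_point_of P_IV"
  unfolding extreme_point_of_def
proof (intro conjI ballI)
  show "v \<in> P_IV" using assms V_in_P by auto
  fix a b assume a: "a \<in> P_IV" and b: "b \<in> P_IV"
  show "v \<notin> open_segment a b"
  proof
    assume "v \<in> open_segment a b"
    then obtain u where ab: "a \<noteq> b" and u: "0 < u" "u < 1" and v: "v = (1 - u) *\<^sub>R a + u *\<^sub>R b"
      unfolding in_segment by blast
    note T = seg_tight[OF a b u v]
    note A = a[unfolded P_IV_iff] and B = b[unfolded P_IV_iff]
    have "a = v \<and> b = v"
      using assms T A B unfolding vec6_eq Vdefs
      by (elim insertE) (simp_all add: Vdefs)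
    then show False using ab by simp
  qed
qed

lemma G_props: assumes "p \<in> G_IV"
  shows "p 0 = 0" "p 1 \<in> {1,2,3}" "p 2 \<in> {1,2,3}" "p 3 \<in> {1,2,3}" "p 1 \<noteq> p 2" "p 1 \<noteq> p 3"
    "p 2 \<noteq> p 3" "p 4 \<in> {4,5}" "p 5 \<in> {4,5}" "p 4 \<noteq> p 5" "p 1 = 1 \<or> p 2 = 1 \<or> p 3 = 1"
proof -
  note H = assms[unfolded G_IV_def mem_Collect_eq]
  have bij: "bij p" using H by (rule conjunct1)
  have p0: "p 0 = 0" using H by (elim conjE)
  have i1: "p ` {1,2,3} = {1,2,3}" using H by (elim conjE)
  have i2: "p ` {4,5} = {4,5}" using H by (elim conjE)
  have inj: "inj p" using bij by (rule bij_is_inj)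
  show "p 0 = 0" by (fact p0)
  have "p 1 \<in> p ` {1,2,3}" "p 2 \<in> p ` {1,2,3}" "p 3 \<in> p ` {1,2,3}" by (rule imageI, simp)+
  then show "p 1 \<in> {1,2,3}" "p 2 \<in> {1,2,3}" "p 3 \<in> {1,2,3}" unfolding i1 .
  have "p 4 \<in> p ` {4,5}" "p 5 \<in> p ` {4,5}" by (rule imageI, simp)+
  then show "p 4 \<in> {4,5}" "p 5 \<in> {4,5}" unfolding i2 .
  show "p 1 \<noteq> p 2" "p 1 \<noteq> p 3" "p 2 \<noteq> p 3" "p 4 \<noteq> p 5"
    by (simp_all only: inj_eq[OF inj]) simp_all
  have "(1::6) \<in> p ` {1,2,3}" unfolding i1 by simp
  then obtain k where "k \<in> {1,2,3::6}" "p k = 1" by (rule imageE) simp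
  then show "p 1 = 1 \<or> p 2 = 1 \<or> p 3 = 1" by auto
qed

lemma pc_nth[simp]: "perm_coords p x $ i = x $ p i" by (simp add: perm_coords_def)

definition "s45 = (\<lambda>i::6. if i = 4 then 5 else if i = 5 then 4 else i)"
definition "s12 = (\<lambda>i::6. if i = 1 then 2 else if i = 2 then 1 else i)"
definition "s13 = (\<lambda>i::6. if i = 1 then 3 else if i = 3 then 1 else i)"

lemma invol_bij: "f \<circ> f = id \<Longrightarrow> bij f" by (metis o_bij)

lemma perms_in_G: "id \<in> G_IV" "s45 \<in> G_IV" "s12 \<in> G_IV" "s13 \<in> G_IV"
proof -
  show "id \<in> G_IV" unfolding G_IV_def by simp
  have "s45 \<circ> s45 = id" "s12 \<circ> s12 = id" "s13 \<circ> s13 = id"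
    by (auto simp: s45_def s12_def s13_def fun_eq_iff)
  then show "s45 \<in> G_IV" "s12 \<in> G_IV" "s13 \<in> G_IV"
    unfolding G_IV_def by (auto simp: invol_bij s45_def s12_def s13_def)
qed

lemma orbit1: "orbit_IV V1 = {V1, V2}"
proof
  show "orbit_IV V1 \<subseteq> {V1, V2}"
  proof
    fix y assume "y \<in> orbit_IV V1"
    then obtain p where p: "p \<in> G_IV" and y: "y = perm_coords p V1" unfolding orbit_IV_def by auto
    note G = G_props[OF p]
    have y0: "y$0 = 0" using G(1) by (simp add: y V1_def)
    have y1: "y$1 = 0" "y$2 = 0" "y$3 = 0" using G(2,3,4) by (auto simp: y V1_def)
    have y4: "y$4 = (if p 4 = 5 then 1 else 0)" "y$5 = (if p 5 = 5 then 1 else 0)"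
      using G(8,9) by (auto simp: y V1_def)
    show "y \<in> {V1, V2}"
    proof (cases "p 4 = 4")
      case True
      then have "p 5 = 5" using G(9,10) by auto
      then have "y = V1" unfolding vec6_eq using True y0 y1 y4 by (simp add: V1_def)
      then show ?thesis by simp
    next
      case False
      then have "p 4 = 5" "p 5 = 4" using G(8,9,10) by auto
      then have "y = V2" unfolding vec6_eq using y0 y1 y4 by (simp add: V2_def)
      then show ?thesis by simp
    qed
  qed
  have "perm_coords id V1 = V1" "perm_coords s45 V1 = V2" unfolding vec6_eq by (simp_all add: Vdefs s45_def)
  moreover have m: "\<And>q. q \<in> G_IV \<Longrightarrow> perm_coords q V1 \<in> orbit_IV V1" unfolding orbit_IV_def by (rule imageI)
  ultimately show "{V1, V2} \<subseteq> orbit_IV V1" using m[OF perms_in_G(1)] m[OF perms_in_G(2)] by simp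
qed

lemma orbit2: "orbit_IV V3 = {V3, V4, V5}"
proof
  show "orbit_IV V3 \<subseteq> {V3, V4, V5}"
  proof
    fix y assume "y \<in> orbit_IV V3"
    then obtain p where p: "p \<in> G_IV" and y: "y = perm_coords p V3" unfolding orbit_IV_def by auto
    note G = G_props[OF p]
    have y0: "y$0 = -1/2" using G(1) by (simp add: y V3_def)
    have y1: "y$1 = (if p 1 = 1 then -1/2 else 1/2)" "y$2 = (if p 2 = 1 then -1/2 else 1/2)"
       "y$3 = (if p 3 = 1 then -1/2 else 1/2)" using G(2,3,4) by (auto simp: y V3_def)
    have y4: "y$4 = 1/2" "y$5 = 1/2" using G(8,9) by (auto simp: y V3_def)
    have "y = V3 \<or> y = V4 \<or> y = V5"
    proof -
      { assume h: "p 1 = 1"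
        then have "p 2 \<noteq> 1" "p 3 \<noteq> 1" using G(5,6) by auto
        then have "y = V3" unfolding vec6_eq using h y0 y1 y4 by (simp add: V3_def) }
      moreover
      { assume h: "p 2 = 1"
        then have "p 1 \<noteq> 1" "p 3 \<noteq> 1" using G(5,7) by auto
        then have "y = V4" unfolding vec6_eq using h y0 y1 y4 by (simp add: V4_def) }
      moreover
      { assume h: "p 3 = 1"
        then have "p 1 \<noteq> 1" "p 2 \<noteq> 1" using G(6,7) by auto
        then have "y = V5" unfolding vec6_eq using h y0 y1 y4 by (simp add: V5_def) }
      ultimately show ?thesis using G(11) by blast
    qed
    then show "y \<in> {V3, V4, V5}" by simp
  qed
  have "perm_coords id V3 = V3" "perm_coords s12 V3 = V4" "perm_coords s13 V3 = V5"
    unfolding vec6_eq by (simp_all add: Vdefs s12_def s13_def)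
  moreover have m: "\<And>q. q \<in> G_IV \<Longrightarrow> perm_coords q V3 \<in> orbit_IV V3" unfolding orbit_IV_def by (rule imageI)
  ultimately show "{V3, V4, V5} \<subseteq> orbit_IV V3" using m[OF perms_in_G(1)] m[OF perms_in_G(3)] m[OF perms_in_G(4)] by simp
qed

lemma orbit3: "orbit_IV V6 = {V6}"
proof
  show "orbit_IV V6 \<subseteq> {V6}"
  proof
    fix y assume "y \<in> orbit_IV V6"
    then obtain p where p: "p \<in> G_IV" and y: "y = perm_coords p V6" unfolding orbit_IV_def by auto
    note G = G_props[OF p]
    have y0: "y$0 = -1" using G(1) by (simp add: y V6_def)
    have y1: "y$1 = 0" "y$2 = 0" "y$3 = 0" using G(2,3,4) by (auto simp: y V6_def)
    have y4: "y$4 = 1" "y$5 = 1" using G(8,9) by (auto simp: y V6_def)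
    have "y = V6" unfolding vec6_eq using y0 y1 y4 by (simp add: V6_def)
    then show "y \<in> {V6}" by simp
  qed
  have "perm_coords id V6 = V6" unfolding vec6_eq by simp
  moreover have m: "\<And>q. q \<in> G_IV \<Longrightarrow> perm_coords q V6 \<in> orbit_IV V6" unfolding orbit_IV_def by (rule imageI)
  ultimately show "{V6} \<subseteq> orbit_IV V6" using m[OF perms_in_G(1)] by simp
qed

theorem lemmaA7:
  shows "{v. v extreme_point_of P_IV} =
     orbit_IV (mk6 0 0 0 0 0 1)
     \<union> orbit_IV (mk6 (-1/2) (-1/2) (1/2) (1/2) (1/2) (1/2))
     \<union> orbit_IV (mk6 (-1) 0 0 0 1 1)"
proof -
  have "orbit_IV (mk6 0 0 0 0 0 1)
     \<union> orbit_IV (mk6 (-1/2) (-1/2) (1/2) (1/2) (1/2) (1/2))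
     \<union> orbit_IV (mk6 (-1) 0 0 0 1 1) = {V1,V2,V3,V4,V5,V6}"
    unfolding V1_def[symmetric] V3_def[symmetric] V6_def[symmetric] orbit1 orbit2 orbit3 by blast
  moreover have "{v. v extreme_point_of P_IV} = {V1,V2,V3,V4,V5,V6}"
  proof
    show "{v. v extreme_point_of P_IV} \<subseteq> {V1,V2,V3,V4,V5,V6}"
    proof
      fix v assume "v \<in> {v. v extreme_point_of P_IV}"
      then have "v extreme_point_of convex hull {V1,V2,V3,V4,V5,V6}" using P_hull by simp
      then show "v \<in> {V1,V2,V3,V4,V5,V6}" by (rule extreme_point_of_convex_hull)
    qed
    show "{V1,V2,V3,V4,V5,V6} \<subseteq> {v. v extreme_point_of P_IV}"
      using extreme_V by blast
  qed
  ultimately show ?thesis by simp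
qed
end
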